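(* In the setting below, the Jacobian matrix $L=\left(\frac{\partial B_i}{\partial w_j}\right)_{i,j=1}^n$ of $(B_1,\dots,B_n)$ with respect to $(w_1,\dots,w_n)$ is, at every point of $W$, symmetric, strictly diagonally dominant (i.e. $|\partial B_i/\partial w_i|>\sum_{j\ne i}|\partial B_i/\partial w_j|$ for each $i$), and negative definite.
   Context: Setting: $T^*$ is a triangulation of a closed surface $S$ with vertex set $T^0$; $\Sigma=S\setminus N(T^0)$ where $N(T^0)$ is a small open regular disjoint neighborhood of $T^0$; $\Sigma$ has boundary components labeled $1,\dots,n$. $T=T^*\cap\Sigma$ is the ideal triangulation with ideal edges $E$ and ideal faces $F$; $ij$ denotes the ideal edge between boundary components $i,j$ and $ijk$ the ideal face adjacent to boundary components $i,j,k$. For each face $ijk$ and positive lengths $l_{ij},l_{jk},l_{ki}$ there is a right-angled hyperbolic hexagon, unique up to isometry, with pairwise non-adjacent sides of these lengths; $\theta_i^f$ is the length of the side of the hexagon of $f=ijk$ opposite to the side of length $l_{jk}$, i.e. $\cosh\theta_i^f=\frac{\cosh l_{jk}+\cosh l_{ki}\cosh l_{ij}}{\sinh l_{ki}\sinh l_{ij}}$. Fix $l^0\in\mathbb{R}_+^{|E|}$. $W=\{w\in\mathbb{R}^n: w_i+w_j>-\ln\cosh\frac{l^0_{ij}}{2}\ \forall ij\in E\}$; for $w\in W$, $l=w*l^0$ is given by $\cosh\frac{l_{ij}}{2}=e^{w_i+w_j}\cosh\frac{l^0_{ij}}{2}$, and $B_i(w)=\sum_{f\in F_i}\theta_i^f$,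 where $F_i$ is the set of faces adjacent to boundary component $i$ ($B_i$ is the length of boundary component $i$ of the glued hyperbolic surface). *)

theory Defs
  imports "HOL-Analysis.Analysis"
begin

text \<open>Boundary components of the surface (= vertices of the triangulation) are the
  elements of a finite type 'n; n = CARD('n). Ideal edges are 2-element vertex sets,
  ideal faces 3-element vertex sets (simplicial triangulation, notation ij, ijk).\<close>

definition link_rel :: "'n set set \<Rightarrow> 'n \<Rightarrow> ('n \<times> 'n) set" where
  "link_rel F v = {(a, b). {v, a, b} \<in> F \<and> card {v, a, b} = 3}"

definition closed_surface_triangulation :: "'n::finite set set \<Rightarrow> 'n set set \<Rightarrow> bool" where
  "closed_surface_triangulation E F \<longleftrightarrow>
     (\<forall>f\<in>F. card f = 3) \<and>
     E = {e. card e = 2 \<and> (\<exists>f\<in>F. e \<subseteq> f)} \<and>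
     (\<forall>e\<in>E. card {f\<in>F. e \<subseteq> f} = 2) \<and>
     (\<forall>v::'n. \<exists>f\<in>F. v \<in> f) \<and>
     (\<forall>v a b. {v, a} \<in> E \<and> {v, b} \<in> E \<longrightarrow> (a, b) \<in> (link_rel F v)\<^sup>*)"

definition edge_len :: "('n set \<Rightarrow> real) \<Rightarrow> real^'n \<Rightarrow> 'n \<Rightarrow> 'n \<Rightarrow> real" where
  "edge_len l0 w i j = 2 * arcosh (exp (w$i + w$j) * cosh (l0 {i, j} / 2))"

definition Wdom :: "'n set set \<Rightarrow> ('n set \<Rightarrow> real) \<Rightarrow> (real^'n) set" where
  "Wdom E l0 = {w. \<forall>i j. {i, j} \<in> E \<longrightarrow> w$i + w$j > - ln (cosh (l0 {i, j} / 2))}"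

text \<open>Generalised angle theta_i^f of face f = ijk at i: the side of the right-angled
  hexagon opposite to the side of length l_jk, i.e.
  cosh theta = (cosh l_jk + cosh l_ki cosh l_ij) / (sinh l_ki sinh l_ij).\<close>
definition theta :: "('n set \<Rightarrow> real) \<Rightarrow> real^'n \<Rightarrow> 'n set \<Rightarrow> 'n \<Rightarrow> real" where
  "theta l0 w f i =
     (let j = SOME j. j \<in> f - {i}; k = SOME k. k \<in> f - {i, j} in
      arcosh ((cosh (edge_len l0 w j k) + cosh (edge_len l0 w k i) * cosh (edge_len l0 w i j))
              / (sinh (edge_len l0 w k i) * sinh (edge_len l0 w i j))))"

definition Bvec :: "'n set set \<Rightarrow> ('n set \<Rightarrow> real) \<Rightarrow> real^'n \<Rightarrow> real^'n" where
  "Bvec F l0 w = (\<chi> i. \<Sum>f\<in>{f\<in>F. i \<in> f}. theta l0 w f i)"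

end

theory Submission
  imports Defs
begin


lemma hd_cosh:
  fixes g :: "'a::real_normed_vector \<Rightarrow> real"
  assumes "(g has_derivative g') (at x)"
  shows "((\<lambda>x. cosh (g x)) has_derivative (\<lambda>h. g' h * sinh (g x))) (at x)"
  by (rule DERIV_compose_FDERIV[OF _ assms]) (auto intro!: derivative_eq_intros)

lemma hd_sinh:
  fixes g :: "'a::real_normed_vector \<Rightarrow> real"
  assumes "(g has_derivative g') (at x)"
  shows "((\<lambda>x. sinh (g x)) has_derivative (\<lambda>h. g' h * cosh (g x))) (at x)"
  by (rule DERIV_compose_FDERIV[OF _ assms]) (auto intro!: derivative_eq_intros)

lemma hd_arcosh:
  fixes g :: "'a::real_normed_vector \<Rightarrow> real"
  assumes "(g has_derivative g') (at x)" "g x > 1"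
  shows "((\<lambda>x. arcosh (g x)) has_derivative (\<lambda>h. g' h * (1 / sqrt ((g x)^2 - 1)))) (at x)"
  by (rule DERIV_compose_FDERIV[OF _ assms(1)]) (auto intro!: derivative_eq_intros assms(2))

lemma hd_exp:
  fixes g :: "'a::real_normed_vector \<Rightarrow> real"
  assumes "(g has_derivative g') (at x)"
  shows "((\<lambda>x. exp (g x)) has_derivative (\<lambda>h. g' h * exp (g x))) (at x)"
  by (rule DERIV_compose_FDERIV[OF _ assms]) (auto intro!: derivative_eq_intros)



definition Dl :: "real \<Rightarrow> real \<Rightarrow> real \<Rightarrow> real" where
  "Dl A B C = A^2 + B^2 + C^2 + 2*A*B*C - 1"

lemma face_alg:
  fixes A B C sa sb sc u v t ha hb hc :: real
  assumes sb: "sb > 0" and sc: "sc > 0" and hsb: "sb^2 = B^2 - 1" and hsc: "sc^2 = C^2 - 1"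
    and u: "u > 0"
  shows "((- (A + B * C) * (inverse (sb * sc) * (sb * (hc * C) + hb * B * sc) * inverse (sb * sc))
          + (ha * sa + (B * (hc * sc) + hb * sb * C)) / (sb * sc)) * (1 / (u / (sb * sc))))
        = (sa * ha - (C + A * B) / sb * hb - (B + A * C) / sc * hc) / u"
proof -
  have "sb * sc > 0" using sb sc by simp
  then show ?thesis using sb sc u
    apply (simp add: field_simps)
    using hsb hsc by algebra
qed

lemma Q_gt1:
  fixes a b c :: real assumes "a > 0" "b > 0" "c > 0"
  shows "(cosh a + cosh b * cosh c) / (sinh b * sinh c) > 1"
proof -
  have "sinh b * sinh c > 0" using assms by simp
  moreover have "cosh b * cosh c - sinh b * sinh c > 0"
    using cosh_diff[of b c] cosh_real_pos[of "b - c"] by simp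
  moreover have "cosh a > 0" by simp
  ultimately show ?thesis by (simp add: field_simps, linarith)
qed

lemma sqrt_Q:
  fixes a b c :: real assumes "a > 0" "b > 0" "c > 0"
  shows "sqrt (((cosh a + cosh b * cosh c) / (sinh b * sinh c))^2 - 1) = sqrt (Dl (cosh a) (cosh b) (cosh c)) / (sinh b * sinh c)"
    and "Dl (cosh a) (cosh b) (cosh c) > 0"
proof -
  have p: "sinh b * sinh c > 0" using assms by simp
  have e: "((cosh a + cosh b * cosh c) / (sinh b * sinh c))^2 - 1 = Dl (cosh a) (cosh b) (cosh c) / (sinh b * sinh c)^2"
  proof -
    have "sinh b \<noteq> 0" "sinh c \<noteq> 0" using assms by auto
    then show ?thesis using cosh_square_eq[of b] cosh_square_eq[of c] unfolding Dl_def
      by (simp add: field_simps power2_eq_square) algebra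
  qed
  have "((cosh a + cosh b * cosh c) / (sinh b * sinh c))^2 > 1^2"
    using Q_gt1[OF assms] by (intro power_strict_mono) auto
  then have "Dl (cosh a) (cosh b) (cosh c) / (sinh b * sinh c)^2 > 0" using e by simp
  then show "Dl (cosh a) (cosh b) (cosh c) > 0" using p
    by (simp add: zero_less_divide_iff)
  show "sqrt (((cosh a + cosh b * cosh c) / (sinh b * sinh c))^2 - 1) = sqrt (Dl (cosh a) (cosh b) (cosh c)) / (sinh b * sinh c)"
    using p unfolding e by (simp add: real_sqrt_divide)
qed

lemma theta_face_deriv:
  fixes ga gb gc :: "'a::real_normed_vector \<Rightarrow> real"
  assumes da: "(ga has_derivative ga') (at x)" and db: "(gb has_derivative gb') (at x)"
    and dc: "(gc has_derivative gc') (at x)"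
    and pa: "ga x > 0" and pb: "gb x > 0" and pc: "gc x > 0"
  shows "((\<lambda>x. arcosh ((cosh (ga x) + cosh (gb x) * cosh (gc x)) / (sinh (gb x) * sinh (gc x))))
     has_derivative
   (\<lambda>h. (sinh (ga x) * ga' h - (cosh (gc x) + cosh (ga x) * cosh (gb x)) / sinh (gb x) * gb' h
          - (cosh (gb x) + cosh (ga x) * cosh (gc x)) / sinh (gc x) * gc' h)
        / sqrt (Dl (cosh (ga x)) (cosh (gb x)) (cosh (gc x))))) (at x)"
proof -
  have sp: "sinh (gb x) * sinh (gc x) > 0" using pb pc by simp
  have N: "((\<lambda>x. cosh (ga x) + cosh (gb x) * cosh (gc x)) has_derivative
      (\<lambda>h. ga' h * sinh (ga x) + (cosh (gb x) * (gc' h * sinh (gc x)) + gb' h * sinh (gb x) * cosh (gc x)))) (at x)"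
    by (intro has_derivative_add hd_cosh has_derivative_mult da db dc)
  have Dn: "((\<lambda>x. sinh (gb x) * sinh (gc x)) has_derivative
      (\<lambda>h. sinh (gb x) * (gc' h * cosh (gc x)) + gb' h * cosh (gb x) * sinh (gc x))) (at x)"
    by (intro hd_sinh has_derivative_mult db dc)
  note Q = has_derivative_divide[OF N Dn, OF sp[THEN less_imp_neq, symmetric]]
  note T = hd_arcosh[OF Q Q_gt1[OF pa pb pc]]
  show ?thesis
    apply (rule has_derivative_eq_rhs[OF T])
    apply (rule ext)
    unfolding sqrt_Q[OF pa pb pc] 
    apply (rule face_alg)
    using pb pc sqrt_Q(2)[OF pa pb pc] by (auto simp: sinh_square_eq)
qed



lemma hd_nth: "((\<lambda>w::real^'n. w$i) has_derivative (\<lambda>h. h$i)) F"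
  by (rule bounded_linear.has_derivative[OF bounded_linear_vec_nth has_derivative_ident])

lemma edge_len_sym: "edge_len l0 w i j = edge_len l0 w j i"
  unfolding edge_len_def by (simp add: insert_commute add.commute)

lemma edge_pos:
  assumes "exp (w$i + w$j) * cosh (l0 {i,j} / 2) > 1"
  shows "edge_len l0 w i j > 0"
  using assms unfolding edge_len_def by simp

lemma edge_deriv:
  fixes w :: "real^'n"
  assumes s1: "exp (w$i + w$j) * cosh (l0 {i,j} / 2) > 1"
  shows "((\<lambda>w. edge_len l0 w i j) has_derivative
     (\<lambda>h. (2 * (cosh (edge_len l0 w i j) + 1) / sinh (edge_len l0 w i j)) * (h$i + h$j))) (at w)"
proof -
  define c0 where "c0 = cosh (l0 {i,j} / 2)"
  define s where "s = exp (w$i + w$j) * c0"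
  have s1': "s > 1" using s1 by (simp add: s_def c0_def)
  have I: "((\<lambda>w::real^'n. exp (w$i + w$j) * c0) has_derivative (\<lambda>h. ((h$i + h$j) * exp (w$i + w$j)) * c0)) (at w)"
    by (intro has_derivative_mult_left hd_exp has_derivative_add hd_nth)
  note A = has_derivative_mult_right[OF hd_arcosh[OF I], of 2]
  have ce: "cosh (edge_len l0 w i j) = 2 * s^2 - 1"
    unfolding edge_len_def s_def[symmetric] c0_def[symmetric]
    using s1' by (simp add: cosh_double_cosh)
  have se: "sinh (edge_len l0 w i j) = 2 * sqrt (s^2 - 1) * s"
    unfolding edge_len_def s_def[symmetric] c0_def[symmetric]
    using s1' by (simp add: sinh_double sinh_arcosh_real)
  have sq: "sqrt (s^2 - 1) > 0" using s1' by (simp add: power_less_one_iff abs_less_iff)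
  have F: "(\<lambda>w. edge_len l0 w i j) = (\<lambda>w. 2 * arcosh (exp (w$i + w$j) * c0))"
    by (simp add: edge_len_def c0_def fun_eq_iff)
  show ?thesis
    unfolding F
    apply (rule has_derivative_eq_rhs[OF A])
    using s1' apply (simp add: s_def)
    apply (rule ext)
    unfolding ce se s_def[symmetric]
    using sq s1' by (simp add: field_simps power2_eq_square s_def)
qed



lemma coef_alg:
  fixes A B C sa sb sc u hi hj hk :: real
  assumes sa: "sa > 0" and sb: "sb > 0" and sc: "sc > 0"
    and hsa: "sa^2 = A^2 - 1" and hsb: "sb^2 = B^2 - 1" and hsc: "sc^2 = C^2 - 1"
    and B: "B > 1" and C: "C > 1" and u: "u > 0"
  shows "(sa * (2 * (A + 1) / sa * (hj + hk)) - (C + A * B) / sb * (2 * (B + 1) / sb * (hk + hi))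
          - (B + A * C) / sc * (2 * (C + 1) / sc * (hi + hj))) / u
       = (-2 * ((C + A * B) / (B - 1) + (B + A * C) / (C - 1)) / u) * hi
         + (2 * (C - A - B - 1) / ((C - 1) * u)) * hj + (2 * (B - A - C - 1) / ((B - 1) * u)) * hk"
proof -
  have b1: "(B + 1) / sb^2 = 1 / (B - 1)" using hsb B sb
    by (simp add: field_simps power2_eq_square)
  have c1: "(C + 1) / sc^2 = 1 / (C - 1)" using hsc C sc
    by (simp add: field_simps power2_eq_square)
  have e1: "(C + A * B) / sb * (2 * (B + 1) / sb * (hk + hi)) = 2 * (C + A * B) * (hk + hi) * ((B + 1) / sb^2)"
    using sb by (simp add: field_simps power2_eq_square)
  have e2: "(B + A * C) / sc * (2 * (C + 1) / sc * (hi + hj)) = 2 * (B + A * C) * (hi + hj) * ((C + 1) / sc^2)"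
    using sc by (simp add: field_simps power2_eq_square)
  obtain p q where p: "B = p + 1" "p > 0" and q: "C = q + 1" "q > 0" using B C
    by (metis add.commute diff_add_cancel diff_gt_0_iff_gt)
  have e0: "sa * (2 * (A + 1) / sa * (hj + hk)) = 2 * (A + 1) * (hj + hk)" using sa by simp
  have nz: "B - 1 \<noteq> 0" "C - 1 \<noteq> 0" "u \<noteq> 0" using B C u by auto
  show ?thesis unfolding e0 e1 e2 b1 c1 using p q u
    by (simp add: field_simps)
qed

definition sgood :: "('n set \<Rightarrow> real) \<Rightarrow> real^'n \<Rightarrow> 'n \<Rightarrow> 'n \<Rightarrow> bool" where
  "sgood l0 w i j \<longleftrightarrow> exp (w$i + w$j) * cosh (l0 {i,j} / 2) > 1"

definition cE :: "('n set \<Rightarrow> real) \<Rightarrow> real^'n \<Rightarrow> 'n \<Rightarrow> 'n \<Rightarrow> real" where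
  "cE l0 w i j = cosh (edge_len l0 w i j)"

definition th3 :: "('n set \<Rightarrow> real) \<Rightarrow> real^'n \<Rightarrow> 'n \<Rightarrow> 'n \<Rightarrow> 'n \<Rightarrow> real" where
  "th3 l0 w i j k = arcosh ((cosh (edge_len l0 w j k) + cosh (edge_len l0 w k i) * cosh (edge_len l0 w i j))
      / (sinh (edge_len l0 w k i) * sinh (edge_len l0 w i j)))"

definition offc :: "('n set \<Rightarrow> real) \<Rightarrow> real^'n \<Rightarrow> 'n \<Rightarrow> 'n \<Rightarrow> 'n \<Rightarrow> real" where
  "offc l0 w i j k = 2 * (cE l0 w i j - cE l0 w j k - cE l0 w k i - 1)
      / ((cE l0 w i j - 1) * sqrt (Dl (cE l0 w j k) (cE l0 w k i) (cE l0 w i j)))"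

definition dgc :: "('n set \<Rightarrow> real) \<Rightarrow> real^'n \<Rightarrow> 'n \<Rightarrow> 'n \<Rightarrow> 'n \<Rightarrow> real" where
  "dgc l0 w i j k = -2 * ((cE l0 w i j + cE l0 w j k * cE l0 w k i) / (cE l0 w k i - 1)
      + (cE l0 w k i + cE l0 w j k * cE l0 w i j) / (cE l0 w i j - 1))
      / sqrt (Dl (cE l0 w j k) (cE l0 w k i) (cE l0 w i j))"

lemma Dl_sym1: "Dl A C B = Dl A B C" unfolding Dl_def by (simp add: algebra_simps)
lemma Dl_sym2: "Dl B A C = Dl A B C" unfolding Dl_def by (simp add: algebra_simps)

lemma sgood_sym: "sgood l0 w i j = sgood l0 w j i"
  unfolding sgood_def by (simp add: insert_commute add.commute)

lemma cE_sym: "cE l0 w i j = cE l0 w j i"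
  unfolding cE_def using edge_len_sym by metis

lemma cE_gt1: "sgood l0 w i j \<Longrightarrow> cE l0 w i j > 1"
  unfolding cE_def sgood_def using edge_pos[of w i j l0] cosh_real_ge_1[of "edge_len l0 w i j"]
    cosh_real_one_iff[of "edge_len l0 w i j"] by (metis less_eq_real_def less_irrefl)

lemma theta3_deriv:
  assumes gij: "sgood l0 w i j" and gjk: "sgood l0 w j k" and gki: "sgood l0 w k i"
  shows "((\<lambda>w. th3 l0 w i j k) has_derivative
     (\<lambda>h. dgc l0 w i j k * h$i + offc l0 w i j k * h$j + offc l0 w i k j * h$k)) (at w)"
proof -
  note da = edge_deriv[of w j k l0, OF gjk[unfolded sgood_def]]
  note db = edge_deriv[of w k i l0, OF gki[unfolded sgood_def]]
  note dc = edge_deriv[of w i j l0, OF gij[unfolded sgood_def]]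
  note pa = edge_pos[of w j k l0, OF gjk[unfolded sgood_def]]
  note pb = edge_pos[of w k i l0, OF gki[unfolded sgood_def]]
  note pc = edge_pos[of w i j l0, OF gij[unfolded sgood_def]]
  note T = theta_face_deriv[OF da db dc pa pb pc]
  have B: "cE l0 w k i > 1" and C: "cE l0 w i j > 1" using cE_gt1 gki gij by auto
  have s1: "cE l0 w k j = cE l0 w j k" "cE l0 w j i = cE l0 w i j" "cE l0 w i k = cE l0 w k i"
    using cE_sym by metis+
  show ?thesis
    unfolding th3_def
    apply (rule has_derivative_eq_rhs[OF T])
    apply (rule ext)
    unfolding dgc_def offc_def s1 Dl_sym1[of "cE l0 w j k" "cE l0 w i j" "cE l0 w k i"]
    unfolding cE_def
    apply (rule coef_alg)
    using pa pb pc B C sqrt_Q(2)[OF pa pb pc] by (auto simp: sinh_square_eq cE_def)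
qed



lemma some_pair:
  assumes f: "f = {i,j,k}" and d: "i \<noteq> j" "j \<noteq> k" "i \<noteq> k"
    and P: "\<And>a b. P a b = P b a"
  shows "(let j' = SOME j. j \<in> f - {i}; k' = SOME k. k \<in> f - {i, j'} in P j' k') = P j k"
proof -
  define j' where "j' = (SOME j. j \<in> f - {i})"
  define k' where "k' = (SOME k. k \<in> f - {i, j'})"
  have "j \<in> f - {i}" using f d by auto
  then have j': "j' \<in> f - {i}" unfolding j'_def by (rule someI)
  then have "j' = j \<or> j' = k" using f by auto
  then show ?thesis
  proof
    assume jj: "j' = j"
    have "k \<in> f - {i, j'}" using f d jj by auto
    then have "k' \<in> f - {i, j'}" unfolding k'_def by (rule someI)
    then have "k' = k" using f jj by auto
    then show ?thesis using jj unfolding Let_def j'_def[symmetric] k'_def[symmetric] by simp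
  next
    assume jk: "j' = k"
    have "j \<in> f - {i, j'}" using f d jk by auto
    then have "k' \<in> f - {i, j'}" unfolding k'_def by (rule someI)
    then have "k' = j" using f jk by auto
    then show ?thesis using jk P unfolding Let_def j'_def[symmetric] k'_def[symmetric] by simp
  qed
qed

lemma th3_swap: "th3 l0 w i k j = th3 l0 w i j k"
  unfolding th3_def using edge_len_sym[of l0 w]
  by (metis (no_types, lifting) mult.commute)

lemma theta_eq:
  assumes "f = {i,j,k}" "i \<noteq> j" "j \<noteq> k" "i \<noteq> k"
  shows "theta l0 w f i = th3 l0 w i j k"
proof -
  have "theta l0 w f i = (let j' = SOME j. j \<in> f - {i}; k' = SOME k. k \<in> f - {i, j'} in th3 l0 w i j' k')"
    unfolding theta_def th3_def ..
  also have "\<dots> = th3 l0 w i j k"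
    by (rule some_pair[OF assms]) (rule th3_swap)
  finally show ?thesis .
qed

definition dgf :: "('n set \<Rightarrow> real) \<Rightarrow> real^'n \<Rightarrow> 'n set \<Rightarrow> 'n \<Rightarrow> real" where
  "dgf l0 w f i = (let j' = SOME j. j \<in> f - {i}; k' = SOME k. k \<in> f - {i, j'} in dgc l0 w i j' k')"

lemma dgc_swap: "dgc l0 w i k j = dgc l0 w i j k"
proof -
  have s1: "cE l0 w k j = cE l0 w j k" "cE l0 w j i = cE l0 w i j" "cE l0 w i k = cE l0 w k i"
    using cE_sym by metis+
  show ?thesis unfolding dgc_def s1 Dl_sym1[of "cE l0 w j k" "cE l0 w i j" "cE l0 w k i"]
    by (simp add: algebra_simps)
qed

lemma dgf_eq:
  assumes "f = {i,j,k}" "i \<noteq> j" "j \<noteq> k" "i \<noteq> k"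
  shows "dgf l0 w f i = dgc l0 w i j k"
  unfolding dgf_def by (rule some_pair[OF assms]) (rule dgc_swap)

lemma offc_swap: "offc l0 w j i k = offc l0 w i j k"
proof -
  have s1: "cE l0 w j i = cE l0 w i j" "cE l0 w i k = cE l0 w k i" "cE l0 w k j = cE l0 w j k"
    using cE_sym by metis+
  show ?thesis unfolding offc_def s1 Dl_sym2[of "cE l0 w k i" "cE l0 w j k" "cE l0 w i j"]
    by (simp add: algebra_simps)
qed

definition coef :: "('n set \<Rightarrow> real) \<Rightarrow> real^'n \<Rightarrow> 'n set \<Rightarrow> 'n \<Rightarrow> 'n \<Rightarrow> real" where
  "coef l0 w f i m = (if m \<notin> f then 0 else if m = i then dgf l0 w f i
      else offc l0 w i m (THE k. k \<in> f - {i, m}))"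

lemma coef_face:
  assumes f: "f = {i,j,k}" and d: "i \<noteq> j" "j \<noteq> k" "i \<noteq> k"
  shows "coef l0 w f i i = dgc l0 w i j k" "coef l0 w f i j = offc l0 w i j k"
    "coef l0 w f i k = offc l0 w i k j"
proof -
  show "coef l0 w f i i = dgc l0 w i j k" unfolding coef_def using dgf_eq[OF assms] f by simp
  have "f - {i, j} = {k}" using f d by auto
  then show "coef l0 w f i j = offc l0 w i j k" unfolding coef_def using f d by simp
  have "f - {i, k} = {j}" using f d by auto
  then show "coef l0 w f i k = offc l0 w i k j" unfolding coef_def using f d by simp
qed

lemma coef_sym:
  assumes f: "card f = 3" and "i \<in> f" "m \<in> f"
  shows "coef l0 w f i m = coef l0 w f m i"
proof (cases "i = m")
  case False
  have "f - {i, m} = f - {m, i}" by auto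
  then have "offc l0 w m i (THE k. k \<in> f - {m,i}) = offc l0 w i m (THE k. k \<in> f - {i,m})"
    using offc_swap by metis
  then show ?thesis unfolding coef_def using False assms by simp
qed simp

lemma coef_sum:
  fixes h :: "real^'n"
  assumes f: "f = {i,j,k}" and d: "i \<noteq> j" "j \<noteq> k" "i \<noteq> k"
  shows "(\<Sum>m\<in>UNIV. coef l0 w f i m * h$m) = dgc l0 w i j k * h$i + offc l0 w i j k * h$j + offc l0 w i k j * h$k"
proof -
  have "(\<Sum>m\<in>UNIV. coef l0 w f i m * h$m) = (\<Sum>m\<in>f. coef l0 w f i m * h$m)"
    by (rule sum.mono_neutral_right) (auto simp: coef_def)
  also have "\<dots> = coef l0 w f i i * h$i + coef l0 w f i j * h$j + coef l0 w f i k * h$k"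
    using f d by (simp add: algebra_simps)
  finally show ?thesis using coef_face[OF assms] by simp
qed

lemma coef_abs_sum:
  assumes f: "f = {i,j,k}" and d: "i \<noteq> j" "j \<noteq> k" "i \<noteq> k"
  shows "(\<Sum>m\<in>UNIV - {i}. \<bar>coef l0 w f i m\<bar>) = \<bar>offc l0 w i j k\<bar> + \<bar>offc l0 w i k j\<bar>"
proof -
  have "(\<Sum>m\<in>UNIV - {i}. \<bar>coef l0 w f i m\<bar>) = (\<Sum>m\<in>{j,k}. \<bar>coef l0 w f i m\<bar>)"
    by (rule sum.mono_neutral_right) (use f d in \<open>auto simp: coef_def\<close>)
  also have "\<dots> = \<bar>coef l0 w f i j\<bar> + \<bar>coef l0 w f i k\<bar>" using d by simp
  finally show ?thesis using coef_face[OF assms] by simp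
qed

lemma dom_alg:
  fixes A B C u :: real
  assumes A: "A > 1" and B: "B > 1" and C: "C > 1" and u: "u > 0"
  shows "\<bar>2 * (C - A - B - 1) / ((C - 1) * u)\<bar> + \<bar>2 * (B - A - C - 1) / ((B - 1) * u)\<bar>
       < - (-2 * ((C + A * B) / (B - 1) + (B + A * C) / (C - 1)) / u)"
proof -
  have c1: "\<bar>C - A - B - 1\<bar> < B + A * C"
  proof -
    have "A * C > A" using A C by simp
    moreover have "A * C > C" using A C by (simp add: mult_strict_right_mono[of 1 A C, simplified])
    ultimately show ?thesis using A B C by linarith
  qed
  have b1: "\<bar>B - A - C - 1\<bar> < C + A * B"
  proof -
    have "A * B > A" using A B by simp
    moreover have "A * B > B" using A B by (simp add: mult_strict_right_mono[of 1 A B, simplified])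
    ultimately show ?thesis using A B C by linarith
  qed
  have "\<bar>2 * (C - A - B - 1) / ((C - 1) * u)\<bar> = 2 * \<bar>C - A - B - 1\<bar> / ((C - 1) * u)"
    by (simp only: abs_divide abs_mult) (use C u in simp)
  also have "\<dots> < 2 * (B + A * C) / ((C - 1) * u)"
    using c1 C u by (intro divide_strict_right_mono) auto
  finally have X: "\<bar>2 * (C - A - B - 1) / ((C - 1) * u)\<bar> < 2 * (B + A * C) / ((C - 1) * u)" .
  have "\<bar>2 * (B - A - C - 1) / ((B - 1) * u)\<bar> = 2 * \<bar>B - A - C - 1\<bar> / ((B - 1) * u)"
    by (simp only: abs_divide abs_mult) (use B u in simp)
  also have "\<dots> < 2 * (C + A * B) / ((B - 1) * u)"
    using b1 B u by (intro divide_strict_right_mono) auto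
  finally have Y: "\<bar>2 * (B - A - C - 1) / ((B - 1) * u)\<bar> < 2 * (C + A * B) / ((B - 1) * u)" .
  have "- (-2 * ((C + A * B) / (B - 1) + (B + A * C) / (C - 1)) / u)
      = 2 * (B + A * C) / ((C - 1) * u) + 2 * (C + A * B) / ((B - 1) * u)"
  proof -
    obtain p q where p: "B = p + 1" "p > 0" and q: "C = q + 1" "q > 0" using B C
      by (metis add.commute diff_add_cancel diff_gt_0_iff_gt)
    show ?thesis using p q u by (simp add: field_simps)
  qed
  then show ?thesis using X Y by linarith
qed

lemma face_dom:
  assumes gij: "sgood l0 w i j" and gjk: "sgood l0 w j k" and gki: "sgood l0 w k i"
  shows "\<bar>offc l0 w i j k\<bar> + \<bar>offc l0 w i k j\<bar> < - dgc l0 w i j k"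
proof -
  have A: "cE l0 w j k > 1" and B: "cE l0 w k i > 1" and C: "cE l0 w i j > 1"
    using cE_gt1 gij gjk gki by auto
  have s1: "cE l0 w k j = cE l0 w j k" "cE l0 w j i = cE l0 w i j" "cE l0 w i k = cE l0 w k i"
    using cE_sym by metis+
  have u: "sqrt (Dl (cE l0 w j k) (cE l0 w k i) (cE l0 w i j)) > 0"
  proof -
    have "cE l0 w j k * cE l0 w j k > 1" using less_1_mult[OF A A] .
    moreover have "cE l0 w j k * cE l0 w k i * cE l0 w i j > 0" using A B C by simp
    moreover have "(cE l0 w k i)^2 > 0" "(cE l0 w i j)^2 > 0" using B C by auto
    ultimately show ?thesis unfolding Dl_def by (simp add: power2_eq_square)
  qed
  show ?thesis unfolding offc_def dgc_def s1 Dl_sym1[of "cE l0 w j k" "cE l0 w i j" "cE l0 w k i"]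
    by (rule dom_alg[OF A B C u])
qed



lemma sum_minus_If:
  fixes f :: "'n::finite \<Rightarrow> real"
  shows "(\<Sum>j\<in>UNIV - {i}. f j) = (\<Sum>j\<in>UNIV. if j = i then 0 else f j)"
  by (rule sum.mono_neutral_cong_left) auto

lemma negdef:
  fixes L :: "real^'n^'n" and x :: "real^'n"
  assumes sym: "\<And>i j. L$i$j = L$j$i"
    and dom: "\<And>i. L$i$i + (\<Sum>j\<in>UNIV - {i}. \<bar>L$i$j\<bar>) < 0"
    and x: "x \<noteq> 0"
  shows "x \<bullet> (L *v x) < 0"
proof -
  define R where "R i = (\<Sum>j\<in>UNIV - {i}. \<bar>L$i$j\<bar>)" for i
  define g where "g i j = (if i = j then L$i$i * (x$i)^2 else \<bar>L$i$j\<bar> * ((x$i)^2 + (x$j)^2) / 2)" for i j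
  have e1: "x \<bullet> (L *v x) = (\<Sum>i\<in>UNIV. \<Sum>j\<in>UNIV. L$i$j * x$i * x$j)"
    by (simp add: inner_vec_def matrix_vector_mult_def sum_distrib_left mult_ac)
  have le: "L$i$j * x$i * x$j \<le> g i j" for i j
  proof (cases "i = j")
    case True then show ?thesis by (simp add: g_def power2_eq_square mult_ac)
  next
    case False
    have a: "2 * \<bar>x$i * x$j\<bar> \<le> (x$i)^2 + (x$j)^2"
    proof -
      have "0 \<le> (\<bar>x$i\<bar> - \<bar>x$j\<bar>)^2" by simp
      then show ?thesis by (simp add: power2_eq_square algebra_simps abs_mult)
    qed
    have "L$i$j * x$i * x$j \<le> \<bar>L$i$j\<bar> * \<bar>x$i * x$j\<bar>"
      by (metis abs_ge_self abs_mult mult.assoc)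
    also have "\<dots> \<le> \<bar>L$i$j\<bar> * (((x$i)^2 + (x$j)^2) / 2)"
      using a by (intro mult_left_mono) auto
    finally show ?thesis using False by (simp add: g_def)
  qed
  have e2: "(\<Sum>i\<in>UNIV. \<Sum>j\<in>UNIV. g i j) = (\<Sum>i\<in>UNIV. (x$i)^2 * (L$i$i + R i))"
  proof -
    have gs: "g i j = (if i = j then L$i$i * (x$i)^2 else 0)
       + (if i = j then 0 else \<bar>L$i$j\<bar> * (x$i)^2 / 2)
       + (if i = j then 0 else \<bar>L$j$i\<bar> * (x$j)^2 / 2)" for i j
      by (simp add: g_def sym[of i j] field_simps)
    have s1: "(\<Sum>i\<in>UNIV. \<Sum>j\<in>UNIV. (if i = j then L$i$i * (x$i)^2 else 0)) = (\<Sum>i\<in>UNIV. L$i$i * (x$i)^2)"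
      by simp
    have s2: "(\<Sum>j\<in>UNIV. (if i = j then 0 else \<bar>L$i$j\<bar> * (x$i)^2 / 2)) = (x$i)^2 / 2 * R i" for i
      unfolding R_def sum_minus_If sum_distrib_left by (rule sum.cong) auto
    have s3: "(\<Sum>i\<in>UNIV. \<Sum>j\<in>UNIV. (if i = j then 0 else \<bar>L$j$i\<bar> * (x$j)^2 / 2))
        = (\<Sum>j\<in>UNIV. \<Sum>i\<in>UNIV. (if i = j then 0 else \<bar>L$j$i\<bar> * (x$j)^2 / 2))"
      by (rule sum.swap)
    have s4: "(\<Sum>i\<in>UNIV. (if i = j then 0 else \<bar>L$j$i\<bar> * (x$j)^2 / 2)) = (x$j)^2 / 2 * R j" for j
      unfolding R_def sum_minus_If sum_distrib_left by (rule sum.cong) auto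
    show ?thesis
      unfolding gs sum.distrib s1 s2 s3 s4
      by (simp add: sum_distrib_left field_simps flip: sum.distrib) (rule sum.cong, auto simp: field_simps)
  qed
  obtain k where k: "x$k \<noteq> 0" using x by (metis vec_eq_iff zero_index)
  have "(\<Sum>i\<in>UNIV. (x$i)^2 * (L$i$i + R i)) < (\<Sum>i\<in>(UNIV::'n set). 0)"
  proof (rule sum_strict_mono_ex1[of UNIV "\<lambda>i. (x$i)^2 * (L$i$i + R i)" "\<lambda>i. 0"])
    show "\<forall>i\<in>UNIV. (x$i)^2 * (L$i$i + R i) \<le> 0"
      using dom unfolding R_def by (simp add: mult_nonneg_nonpos less_imp_le)
    show "\<exists>i\<in>UNIV. (x$i)^2 * (L$i$i + R i) < 0"
      using dom[of k] k unfolding R_def by (intro bexI[of _ k]) (auto simp: mult_pos_neg)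
  qed simp
  moreover have "x \<bullet> (L *v x) \<le> (\<Sum>i\<in>UNIV. \<Sum>j\<in>UNIV. g i j)"
    unfolding e1 by (intro sum_mono le)
  ultimately show ?thesis unfolding e2 by simp
qed



lemma hd_vec:
  fixes f :: "'a::real_normed_vector \<Rightarrow> real^'n"
  assumes "\<And>i. ((\<lambda>x. f x $ i) has_derivative (\<lambda>h. f' h $ i)) (at w)"
  shows "(f has_derivative f') (at w)"
  apply (rule iffD2[OF has_derivative_componentwise_within])
  using assms by (auto simp: Basis_vec_def cart_eq_inner_axis[symmetric])

lemma face_decomp:
  assumes "card f = 3" "i \<in> f"
  obtains j k where "f = {i,j,k}" "i \<noteq> j" "j \<noteq> k" "i \<noteq> k"
proof -
  obtain x y z where f: "f = {x,y,z}" "x \<noteq> y" "y \<noteq> z" "x \<noteq> z"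
    using assms(1) card_3_iff by metis
  have "i = x \<or> i = y \<or> i = z" using f assms(2) by auto
  then show ?thesis
  proof (elim disjE)
    assume "i = x" then show ?thesis using that[of y z] f by auto
  next
    assume "i = y" then show ?thesis using that[of x z] f by auto
  next
    assume "i = z" then show ?thesis using that[of x y] f by auto
  qed
qed

lemma good_pair:
  assumes cst: "closed_surface_triangulation E F" and W: "w \<in> Wdom E l0"
    and f: "f \<in> F" "a \<in> f" "b \<in> f" "a \<noteq> b"
  shows "sgood l0 w a b"
proof -
  have "{a,b} \<in> E" using cst f unfolding closed_surface_triangulation_def by auto
  then have g: "w$a + w$b > - ln (cosh (l0 {a,b} / 2))" using W unfolding Wdom_def by blast
  have c: "cosh (l0 {a,b} / 2) > 0" by simp
  have "exp (w$a + w$b) > exp (- ln (cosh (l0 {a,b} / 2)))" using g by simp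
  also have "exp (- ln (cosh (l0 {a,b} / 2))) = 1 / cosh (l0 {a,b} / 2)"
    using c by (simp add: exp_minus inverse_eq_divide)
  finally show ?thesis unfolding sgood_def using c by (simp add: field_simps)
qed

theorem lemma3p1:
  fixes E F :: "'n::finite set set" and l0 :: "'n set \<Rightarrow> real" and w :: "real^'n"
  assumes "closed_surface_triangulation E F"
    and "\<forall>e\<in>E. l0 e > 0"
    and "w \<in> Wdom E l0"
  shows "\<exists>L :: real^'n^'n.
           (Bvec F l0 has_derivative (\<lambda>h. L *v h)) (at w) \<and>
           transpose L = L \<and>
           (\<forall>i. \<bar>L$i$i\<bar> > (\<Sum>j\<in>UNIV - {i}. \<bar>L$i$j\<bar>)) \<and>
           (\<forall>x. x \<noteq> 0 \<longrightarrow> x \<bullet> (L *v x) < 0)"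
proof -
  note cst = assms(1) and W = assms(3)
  have card3: "\<And>f. f \<in> F \<Longrightarrow> card f = 3" using cst unfolding closed_surface_triangulation_def by auto
  have cover: "\<And>v. \<exists>f\<in>F. v \<in> f" using cst unfolding closed_surface_triangulation_def by auto
  have fin: "finite {f\<in>F. i \<in> f}" for i by simp
  have good: "\<And>f a b. f \<in> F \<Longrightarrow> a \<in> f \<Longrightarrow> b \<in> f \<Longrightarrow> a \<noteq> b \<Longrightarrow> sgood l0 w a b"
    using good_pair[OF cst W] by blast
  define L :: "real^'n^'n" where "L = (\<chi> i m. \<Sum>f\<in>{f\<in>F. i \<in> f}. coef l0 w f i m)"
  have Lij: "L$i$m = (\<Sum>f\<in>{f\<in>F. i \<in> f}. coef l0 w f i m)" for i m
    unfolding L_def by simp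
  have fderiv: "((\<lambda>w. theta l0 w f i) has_derivative (\<lambda>h. \<Sum>m\<in>UNIV. coef l0 w f i m * h$m)) (at w)"
    if f: "f \<in> F" "i \<in> f" for f i
  proof -
    obtain j k where fd: "f = {i,j,k}" "i \<noteq> j" "j \<noteq> k" "i \<noteq> k"
      using face_decomp[OF card3[OF f(1)] f(2)] by blast
    have eq: "(\<lambda>w. theta l0 w f i) = (\<lambda>w. th3 l0 w i j k)"
      using theta_eq[OF fd] by blast
    have "sgood l0 w i j" "sgood l0 w j k" "sgood l0 w k i"
      using good[OF f(1)] fd by auto
    note D = theta3_deriv[OF this]
    show ?thesis unfolding eq coef_sum[OF fd] by (rule D)
  qed
  have deriv: "(Bvec F l0 has_derivative (\<lambda>h. L *v h)) (at w)"
  proof (rule hd_vec)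
    fix i
    have "((\<lambda>w. \<Sum>f\<in>{f\<in>F. i \<in> f}. theta l0 w f i) has_derivative
        (\<lambda>h. \<Sum>f\<in>{f\<in>F. i \<in> f}. \<Sum>m\<in>UNIV. coef l0 w f i m * h$m)) (at w)"
      by (rule has_derivative_sum) (use fderiv in auto)
    moreover have "(\<lambda>h. \<Sum>f\<in>{f\<in>F. i \<in> f}. \<Sum>m\<in>UNIV. coef l0 w f i m * h$m) = (\<lambda>h. (L *v h)$i)"
      by (rule ext) (simp add: matrix_vector_mult_def Lij sum_distrib_right sum.swap[of _ UNIV])
    ultimately show "((\<lambda>x. Bvec F l0 x $ i) has_derivative (\<lambda>h. (L *v h) $ i)) (at w)"
      by (simp add: Bvec_def)
  qed
  have sym: "L$i$m = L$m$i" for i m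
  proof -
    have "L$i$m = (\<Sum>f\<in>{f\<in>F. i \<in> f \<and> m \<in> f}. coef l0 w f i m)"
      unfolding Lij by (rule sum.mono_neutral_right) (auto simp: coef_def)
    also have "\<dots> = (\<Sum>f\<in>{f\<in>F. i \<in> f \<and> m \<in> f}. coef l0 w f m i)"
      by (rule sum.cong) (auto intro: coef_sym card3)
    also have "\<dots> = L$m$i"
      unfolding Lij by (rule sum.mono_neutral_left) (auto simp: coef_def)
    finally show ?thesis .
  qed
  have tr: "transpose L = L"
    by (simp add: transpose_def vec_eq_iff sym)
  have row: "L$i$i < 0 \<and> L$i$i + (\<Sum>j\<in>UNIV - {i}. \<bar>L$i$j\<bar>) < 0" for i
  proof -
    have fdom: "(\<Sum>m\<in>UNIV - {i}. \<bar>coef l0 w f i m\<bar>) < - coef l0 w f i i \<and> coef l0 w f i i < 0"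
      if f: "f \<in> F" "i \<in> f" for f
    proof -
      obtain j k where fd: "f = {i,j,k}" "i \<noteq> j" "j \<noteq> k" "i \<noteq> k"
        using face_decomp[OF card3[OF f(1)] f(2)] by blast
      have "sgood l0 w i j" "sgood l0 w j k" "sgood l0 w k i"
        using good[OF f(1)] fd by auto
      note D = face_dom[OF this]
      then show ?thesis unfolding coef_abs_sum[OF fd] coef_face(1)[OF fd] by linarith
    qed
    obtain f0 where f0: "f0 \<in> F" "i \<in> f0" using cover by blast
    have ne: "{f\<in>F. i \<in> f} \<noteq> {}" using f0 by auto
    have "(\<Sum>j\<in>UNIV - {i}. \<bar>L$i$j\<bar>) < - L$i$i"
    proof -
      have "(\<Sum>j\<in>UNIV - {i}. \<bar>L$i$j\<bar>) \<le> (\<Sum>j\<in>UNIV - {i}. \<Sum>f\<in>{f\<in>F. i \<in> f}. \<bar>coef l0 w f i j\<bar>)"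
        unfolding Lij by (intro sum_mono sum_abs)
      also have "\<dots> = (\<Sum>f\<in>{f\<in>F. i \<in> f}. \<Sum>j\<in>UNIV - {i}. \<bar>coef l0 w f i j\<bar>)"
        by (rule sum.swap)
      also have "\<dots> < (\<Sum>f\<in>{f\<in>F. i \<in> f}. - coef l0 w f i i)"
        by (rule sum_strict_mono) (use fin ne fdom in auto)
      also have "\<dots> = - L$i$i" unfolding Lij by (simp add: sum_negf)
      finally show ?thesis .
    qed
    moreover have "(\<Sum>j\<in>UNIV - {i}. \<bar>L$i$j\<bar>) \<ge> 0" by (simp add: sum_nonneg)
    ultimately show ?thesis by linarith
  qed
  have dom: "\<forall>i. \<bar>L$i$i\<bar> > (\<Sum>j\<in>UNIV - {i}. \<bar>L$i$j\<bar>)"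
  proof
    fix i show "\<bar>L$i$i\<bar> > (\<Sum>j\<in>UNIV - {i}. \<bar>L$i$j\<bar>)"
      using row[of i] abs_of_neg[of "L$i$i"] by linarith
  qed
  have nd: "\<forall>x. x \<noteq> 0 \<longrightarrow> x \<bullet> (L *v x) < 0"
    using negdef[of L] sym row by blast
  show ?thesis using deriv tr dom nd by blast
qed

end
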